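(* Let $n$ be a positive integer. All eigenvalues of the Fibonacci--Redheffer matrix $F_R(n)$ are real and simple (of algebraic multiplicity $1$). Furthermore, if $\lambda_1<\lambda_2<\cdots<\lambda_n$ are the eigenvalues of $F_R(n)$, then \[ \lambda_1<1,\qquad F_i<\lambda_i<F_{i+1}\ \ (i=2,3,\ldots,n-1),\qquad \lambda_n>F_n. \]
   Context: The Fibonacci numbers are $F_1=F_2=1$, $F_n=F_{n-1}+F_{n-2}$ for $n\ge 3$. The Fibonacci--Redheffer matrix $F_R(n)=[F_R(i,j)]_{i,j=1}^n$ is defined by $F_R(i,j)=1$ if $j=1$; $F_R(i,j)=F_i$ if $i\mid j$; and $F_R(i,j)=0$ otherwise. *)

theory Defs
  imports "Jordan_Normal_Form.Char_Poly" "HOL-Number_Theory.Fib"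
begin

text \<open>Fibonacci--Redheffer matrix F_R(n), as a complex n x n matrix.
  Paper indices 1..n correspond to 0-based indices i, j < n via i+1, j+1.
  fib is the library Fibonacci function: fib 1 = fib 2 = 1.\<close>
definition FR :: "nat \<Rightarrow> complex mat" where
  "FR n = mat n n (\<lambda>(i, j).
      if j + 1 = 1 then 1
      else if (i + 1) dvd (j + 1) then of_nat (fib (i + 1))
      else 0)"

end

theory Submission
  imports Defs
begin

lemma fib_2j: assumes "j \<ge> 2" shows "fib (2*j) \<ge> 3 * fib j"
proof -
  obtain i where j: "j = Suc (Suc i)" using assms by (metis add_2_eq_Suc le_Suc_ex)
  have "fib (2*j) = (fib (j - 1) + fib (j + 1)) * fib j" by (rule fib_rec_even)
  moreover have "fib (j - 1) \<ge> 1" using j by (simp add: Suc_leI fib_neq_0_nat)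
  moreover have "fib (j + 1) \<ge> 2" using j fib_mono[of 3 "j+1"] by (simp add: numeral_3_eq_3)
  ultimately have "fib (2*j) = fib (j - 1) * fib j + fib (j + 1) * fib j" "1 * fib j \<le> fib (j - 1) * fib j"
    "2 * fib j \<le> fib (j + 1) * fib j"
    by (simp_all add: add_mult_distrib mult_le_mono1 del: mult_1)
  then show ?thesis by linarith
qed

lemma fib_plus2_ge: assumes "m \<ge> 2" shows "2 * fib (m + 2) \<ge> 5 * fib m"
proof -
  obtain i where m: "m = Suc (Suc i)" using assms by (metis add_2_eq_Suc le_Suc_ex)
  have "fib (Suc i) \<le> fib (Suc (Suc i))" by (rule fib_Suc_mono)
  moreover have "fib i \<le> fib (Suc i)" by (rule fib_Suc_mono)
  ultimately show ?thesis using m by (simp add: fib_plus_2 numeral_eq_Suc)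
qed

lemma fib_tj_step: assumes "j \<ge> 2" "t \<ge> 1"
  shows "2 * (real (fib ((t+1)*j)) - fib j) \<ge> 5 * (real (fib (t*j)) - fib j)"
proof -
  have "t*j \<ge> 2" using assms mult_le_mono[of 1 t 2 j] by simp
  have "fib (t*j + 2) \<le> fib ((t+1)*j)" using assms by (intro fib_mono) simp
  with fib_plus2_ge[OF \<open>t*j \<ge> 2\<close>] have "5 * fib (t*j) \<le> 2 * fib ((t+1)*j)" by linarith
  then have "real (5 * fib (t*j)) \<le> real (2 * fib ((t+1)*j))" by (simp only: of_nat_le_iff)
  then have "5 * real (fib (t*j)) \<le> 2 * real (fib ((t+1)*j))" by simp
  moreover have "real (fib j) \<ge> 0" by simp
  ultimately show ?thesis by (simp add: algebra_simps)
qed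

lemma fib_tj_pos: assumes "j \<ge> 2" "t \<ge> 2"
  shows "real (fib (t*j)) - fib j \<ge> 2 * fib j"
proof -
  have "fib (2*j) \<le> fib (t*j)" using assms by (intro fib_mono) simp
  with fib_2j[OF assms(1)] have "3 * fib j \<le> fib (t*j)" by linarith
  then have "real (3 * fib j) \<le> real (fib (t*j))" by (simp only: of_nat_le_iff)
  then have "3 * real (fib j) \<le> real (fib (t*j))" by simp
  then show ?thesis by linarith
qed

lemma key_ineq: fixes a b :: real assumes "a > 0" "b > 0" "2*b \<ge> 5*a"
  shows "1 / a + 5/3 * (1 / b) \<le> 5/3 * (1/ a)"
proof -
  have "5/3 * (1/b) \<le> 2/3 * (1/a)" using assms by (simp add: field_simps)
  then show ?thesis by simp
qed

lemma lin_aux: fixes A Y Z :: real assumes "Y + 5/3*Z \<le> 5/3*Y" shows "5/3*(A - Y) + Y \<le> 5/3*(A - Z)"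
proof -
  have "5/3*(A - Y) = 5/3*A - 5/3*Y" "5/3*(A-Z) = 5/3*A - 5/3*Z" by (simp_all only: right_diff_distrib)
  then show ?thesis using assms by argo
qed

lemma fib_tele: assumes "j \<ge> 2" "T \<ge> 1"
  shows "(\<Sum>t=2..T. 1 / (real (fib (t*j)) - fib j)) \<le>
     5/3 * (1 / (real (fib (2*j)) - fib j) - 1 / (real (fib ((T+1)*j)) - fib j))"
  using assms(2)
proof (induction T rule: dec_induct)
  case base
  then show ?case by (simp add: mult_2)
next
  case (step T)
  let ?a = "\<lambda>t. real (fib (t*j)) - fib j"
  have pj: "real (fib j) > 0" using assms by (simp add: fib_neq_0_nat)
  have a1: "?a (T+1) > 0" using fib_tj_pos[OF assms(1), of "T+1"] step pj by linarith
  have a2: "?a (T+2) > 0" using fib_tj_pos[OF assms(1), of "T+2"] step pj by linarith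
  have st: "2 * ?a (T+2) \<ge> 5 * ?a (T+1)" using fib_tj_step[OF assms(1), of "T+1"] step by simp
  have key: "1 / ?a (T+1) + 5/3 * (1 / ?a (T+2)) \<le> 5/3 * (1/ ?a (T+1))"
    using key_ineq[OF a1 a2 st] .
  have "(\<Sum>t=2..Suc T. 1 / ?a t) = (\<Sum>t=2..T. 1 / ?a t) + 1 / ?a (T+1)"
    using step by simp
  also have "\<dots> \<le> 5/3 * (1 / ?a 2 - 1 / ?a (T+1)) + 1 / ?a (T+1)" using step by simp
  also have "\<dots> \<le> 5/3 * (1 / ?a 2 - 1 / ?a (T+2))" using lin_aux[OF key] .
  finally show ?case by (simp add: add.commute)
qed

lemma fib_multsum: assumes "j \<ge> 2"
  shows "real (fib j) * (\<Sum>t=2..T. 1 / (real (fib (t*j)) - fib j)) \<le> 5/6"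
proof (cases "T \<ge> 1")
  case False then show ?thesis by simp
next
  case True
  let ?a = "\<lambda>t. real (fib (t*j)) - fib j"
  have pj: "real (fib j) > 0" using assms by (simp add: fib_neq_0_nat)
  have a2: "?a 2 \<ge> 2 * fib j" using fib_tj_pos[OF assms(1), of 2] by simp
  have aT: "?a (T+1) > 0" using fib_tj_pos[OF assms(1), of "T+1"] True pj by linarith
  have "(\<Sum>t=2..T. 1 / ?a t) \<le> 5/3 * (1 / ?a 2)"
  proof -
    have "1 / ?a (T+1) > 0" using aT by simp
    moreover have "5/3 * (1 / ?a 2 - 1 / ?a (T+1)) = 5/3 * (1 / ?a 2) - 5/3 * (1 / ?a (T+1))"
      by (rule right_diff_distrib)
    ultimately show ?thesis using fib_tele[OF assms True] by linarith
  qed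
  also have "\<dots> \<le> 5/3 * (1 / (2 * fib j))" using a2 pj by (simp add: frac_le)
  finally have "(\<Sum>t=2..T. 1 / ?a t) \<le> 5/3 * (1 / (2 * fib j))" .
  then have "fib j * (\<Sum>t=2..T. 1 / ?a t) \<le> fib j * (5/3 * (1 / (2 * fib j)))"
    by (rule mult_left_mono) (use pj in auto)
  also have "\<dots> = 5/6" using pj by simp
  finally show ?thesis .
qed

definition ff :: "nat \<Rightarrow> real" where "ff a = real (fib (Suc a))"
definition lin :: "nat \<Rightarrow> real poly" where "lin c = [:- ff c, 1:]"
definition Sd :: "nat \<Rightarrow> nat \<Rightarrow> nat set" where "Sd n a = {l. a < l \<and> l < n \<and> Suc a dvd Suc l}"

lemma Sd_finite[simp]: "finite (Sd n a)" unfolding Sd_def by (rule finite_subset[of _ "{..<n}"]) auto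

function hp :: "nat \<Rightarrow> nat \<Rightarrow> real poly" where
  "hp n a = (if a < n then (\<Prod>c\<in>{Suc a..<n}. lin c) +
      Polynomial.smult (ff a) (\<Sum>l\<in>Sd n a. hp n l * (\<Prod>c\<in>{Suc a..<l}. lin c)) else 0)"
  by pat_completeness auto
termination by (relation "measure (\<lambda>(n,a). n - a)") (auto simp: Sd_def)

declare hp.simps[simp del]

lemma poly_hp: "a < n \<Longrightarrow> poly (hp n a) x = (\<Prod>c\<in>{Suc a..<n}. x - ff c) +
      ff a * (\<Sum>l\<in>Sd n a. poly (hp n l) x * (\<Prod>c\<in>{Suc a..<l}. x - ff c))"
  by (subst hp.simps) (simp add: poly_sum poly_prod lin_def)

definition Pn :: "nat \<Rightarrow> real poly" where
  "Pn n = (\<Prod>c<n. lin c) - (\<Sum>l\<in>{1..<n}. hp n l * (\<Prod>c\<in>{1..<l}. lin c))"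

lemma poly_Pn: "poly (Pn n) x = (\<Prod>c<n. x - ff c) - (\<Sum>l\<in>{1..<n}. poly (hp n l) x * (\<Prod>c\<in>{1..<l}. x - ff c))"
  by (simp add: Pn_def poly_sum poly_prod lin_def)

definition FRr :: "nat \<Rightarrow> real mat" where
  "FRr n = mat n n (\<lambda>(i, j).
      if j + 1 = 1 then 1
      else if (i + 1) dvd (j + 1) then real (fib (i + 1))
      else 0)"

lemma FR_FRr: "FR n = map_mat complex_of_real (FRr n)"
  by (rule eq_matI) (auto simp: FR_def FRr_def)

lemma ff0[simp]: "ff 0 = 1" by (simp add: ff_def)

lemma ff_pos: "ff a > 0" by (simp add: ff_def fib_neq_0_nat)

lemma fib_strict_aux: "fib (i + 2) < fib (Suc (i + 2))"
proof -
  have "fib (Suc (i+2)) = fib (i + 2) + fib (i+1)" using fib_plus_2[of "i+1"] by simp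
  moreover have "fib (i+1) > 0" by (simp add: fib_neq_0_nat)
  ultimately show ?thesis by simp
qed

lemma ff_strict: assumes "1 \<le> a" "a < b" shows "ff a < ff b"
proof -
  have "fib ((a - 1) + 2) < fib ((b - 1) + 2)"
    using lift_Suc_mono_less[of "\<lambda>i. fib (i + 2)", OF _ , of "a - 1" "b - 1"] fib_strict_aux assms
    by fastforce
  then show ?thesis using assms by (simp add: ff_def)
qed

lemma ff_mono: assumes "a \<le> b" shows "ff a \<le> ff b"
  using assms by (simp add: ff_def fib_mono)

lemma detlemma:
  assumes n: "n \<ge> 1" and x: "\<And>c. c < n \<Longrightarrow> x \<noteq> ff c"
  shows "poly (char_poly (FRr n)) x = poly (Pn n) x"
proof -
  define ww where "ww l = (if l = 0 then (\<Sum>l'\<in>{1..<n}. poly (hp n l') x / (\<Prod>c\<in>{l'..<n}. x - ff c)) / (x - 1)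
     else poly (hp n l) x / (\<Prod>c\<in>{l..<n}. x - ff c))" for l
  define M where "M = mat n n (\<lambda>(r,c). if r = c then x - ff r else if r < c \<and> Suc r dvd Suc c then - ff r else (0::real))"
  define N where "N = mat n n (\<lambda>(r,c). (if r = c then 1 else 0) - (if c = 0 then ww r else (0::real)))"
  define B where "B = mat n n (\<lambda>(r,c). (if r = c then x else 0) - FRr n $$ (r,c))"
  have pz: "(\<Prod>c\<in>{a..<b}. x - ff c) \<noteq> 0" if "b \<le> n" for a b
    using x that by (auto simp: prod_zero_iff)
  have cp: "poly (char_poly (FRr n)) x = det B"
    unfolding char_poly_def
    by (rule poly_det_cong[of B n]) (auto simp: B_def FRr_def char_poly_matrix_def)
  have split: "(\<Sum>l<n. M $$ (r,l) * ww l) = (x - ff r) * ww r - ff r * (\<Sum>l\<in>Sd n r. ww l)" if r: "r < n" for r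
  proof -
    have "(\<Sum>l<n. M $$ (r,l) * ww l) = (\<Sum>l<n. (if l = r then (x - ff r) * ww r else 0) + (if l \<in> Sd n r then - (ff r * ww l) else 0))"
      by (rule sum.cong) (auto simp: M_def Sd_def r)
    also have "\<dots> = (x - ff r) * ww r + (\<Sum>l\<in>{..<n} \<inter> Sd n r. - (ff r * ww l))"
      by (simp add: sum.distrib sum.inter_restrict r)
    also have "{..<n} \<inter> Sd n r = Sd n r" by (auto simp: Sd_def)
    finally show ?thesis by (simp add: sum_negf sum_distrib_left)
  qed
  have Mw: "(\<Sum>l<n. M $$ (r,l) * ww l) = (if r = 0 then 0 else 1)" if r: "r < n" for r
  proof (cases "r = 0")
    case True
    have "Sd n 0 = {1..<n}" by (auto simp: Sd_def)
    moreover have "x - 1 \<noteq> 0" using x[of 0] n by auto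
    ultimately show ?thesis using True split[OF r] by (simp add: ww_def)
  next
    case False
    have e1: "(\<Prod>c\<in>{r..<n}. x - ff c) = (x - ff r) * (\<Prod>c\<in>{Suc r..<n}. x - ff c)"
      using r by (simp add: prod.atLeast_Suc_lessThan)
    have xr: "x - ff r \<noteq> 0" using x r by auto
    have "(x - ff r) * ww r = poly (hp n r) x / (\<Prod>c\<in>{Suc r..<n}. x - ff c)"
      using False e1 xr by (simp add: ww_def)
    also have "\<dots> = ((\<Prod>c\<in>{Suc r..<n}. x - ff c) + ff r * (\<Sum>l\<in>Sd n r. poly (hp n l) x * (\<Prod>c\<in>{Suc r..<l}. x - ff c))) / (\<Prod>c\<in>{Suc r..<n}. x - ff c)"
      using r by (simp add: poly_hp)
    also have "\<dots> = 1 + ff r * ((\<Sum>l\<in>Sd n r. poly (hp n l) x * (\<Prod>c\<in>{Suc r..<l}. x - ff c)) / (\<Prod>c\<in>{Suc r..<n}. x - ff c))"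
      using pz[of n "Suc r"] by (simp add: add_divide_distrib)
    also have "(\<Sum>l\<in>Sd n r. poly (hp n l) x * (\<Prod>c\<in>{Suc r..<l}. x - ff c)) / (\<Prod>c\<in>{Suc r..<n}. x - ff c)
       = (\<Sum>l\<in>Sd n r. poly (hp n l) x * (\<Prod>c\<in>{Suc r..<l}. x - ff c) / (\<Prod>c\<in>{Suc r..<n}. x - ff c))"
      by (rule sum_divide_distrib)
    also have "(\<Sum>l\<in>Sd n r. poly (hp n l) x * (\<Prod>c\<in>{Suc r..<l}. x - ff c) / (\<Prod>c\<in>{Suc r..<n}. x - ff c))
       = (\<Sum>l\<in>Sd n r. ww l)"
    proof (rule sum.cong)
      fix l assume l: "l \<in> Sd n r"
      then have "Suc r \<le> l" "l \<le> n" "l \<noteq> 0" by (auto simp: Sd_def)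
      then have "(\<Prod>c\<in>{Suc r..<n}. x - ff c) = (\<Prod>c\<in>{Suc r..<l}. x - ff c) * (\<Prod>c\<in>{l..<n}. x - ff c)"
        by (simp add: prod.atLeastLessThan_concat)
      then show "poly (hp n l) x * (\<Prod>c\<in>{Suc r..<l}. x - ff c) / (\<Prod>c\<in>{Suc r..<n}. x - ff c) = ww l"
        using pz[of l "Suc r"] pz[of n l] \<open>l \<le> n\<close> \<open>l \<noteq> 0\<close> by (simp add: ww_def)
    qed simp
    finally show ?thesis using split[OF r] False by simp
  qed
  have BMN: "B = M * N"
  proof (rule eq_matI)
    fix r c assume r: "r < dim_row (M * N)" and c: "c < dim_col (M * N)"
    then have r: "r < n" and c: "c < n" by (auto simp: M_def N_def)
    have "(M * N) $$ (r,c) = (\<Sum>l<n. M $$ (r,l) * ((if l = c then 1 else 0) - (if c = 0 then ww l else 0)))"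
      using r c by (simp add: M_def N_def scalar_prod_def lessThan_atLeast0)
    also have "\<dots> = (\<Sum>l<n. M $$ (r,l) * (if l = c then 1 else 0)) - (if c = 0 then (\<Sum>l<n. M $$ (r,l) * ww l) else 0)"
      by (simp add: right_diff_distrib sum_subtractf)
    also have "\<dots> = M $$ (r,c) - (if c = 0 then (if r = 0 then 0 else 1) else 0)"
      using c Mw[OF r] by (simp add: mult.commute[of _ "if _ then _ else _"] if_distrib cong: if_cong)
    also have "\<dots> = B $$ (r,c)"
      using r c by (auto simp: M_def B_def FRr_def ff_def dest: dvd_imp_le)
    finally show "B $$ (r,c) = (M * N) $$ (r,c)" by simp
  qed (auto simp: B_def M_def N_def)
  have dM: "det M = (\<Prod>r<n. x - ff r)"
    by (subst det_upper_triangular[of _ n]) (auto simp: M_def upper_triangular_def prod_list_diag_prod lessThan_atLeast0)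
  have dN: "det N = 1 - ww 0"
  proof -
    have "det N = (\<Prod>r = 0..<n. N $$ (r,r))"
      by (subst det_lower_triangular[of n]) (auto simp: N_def prod_list_diag_prod)
    also have "\<dots> = N $$ (0,0) * (\<Prod>r = Suc 0..<n. N $$ (r,r))" using n by (simp add: prod.atLeast_Suc_lessThan)
    also have "(\<Prod>r = Suc 0..<n. N $$ (r,r)) = 1" by (rule prod.neutral) (auto simp: N_def)
    finally show ?thesis using n by (simp add: N_def)
  qed
  have "det B = (\<Prod>r<n. x - ff r) * (1 - ww 0)"
    unfolding BMN dM[symmetric] dN[symmetric] by (rule det_mult[of _ n]) (auto simp: M_def N_def)
  also have "\<dots> = poly (Pn n) x"
  proof -
    have e: "(\<Prod>r<n. x - ff r) = (x - 1) * (\<Prod>r\<in>{1..<n}. x - ff r)"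
      using n by (simp add: lessThan_atLeast0 prod.atLeast_Suc_lessThan)
    have x1: "x - 1 \<noteq> 0" using x[of 0] n by auto
    have "(\<Prod>r<n. x - ff r) * ww 0 = (\<Prod>r\<in>{1..<n}. x - ff r) * (\<Sum>l'\<in>{1..<n}. poly (hp n l') x / (\<Prod>c\<in>{l'..<n}. x - ff c))"
      using e x1 by (simp add: ww_def)
    also have "\<dots> = (\<Sum>l\<in>{1..<n}. poly (hp n l) x * (\<Prod>c\<in>{1..<l}. x - ff c))"
      unfolding sum_distrib_left
    proof (rule sum.cong)
      fix l assume l: "l \<in> {1..<n}"
      then have "(\<Prod>c\<in>{1..<n}. x - ff c) = (\<Prod>c\<in>{1..<l}. x - ff c) * (\<Prod>c\<in>{l..<n}. x - ff c)"
        by (simp add: prod.atLeastLessThan_concat)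
      then show "(\<Prod>r\<in>{1..<n}. x - ff r) * (poly (hp n l) x / (\<Prod>c\<in>{l..<n}. x - ff c)) =
         poly (hp n l) x * (\<Prod>c\<in>{1..<l}. x - ff c)" using pz[of n l] by simp
    qed simp
    finally show ?thesis by (simp add: poly_Pn right_diff_distrib)
  qed
  finally show ?thesis using cp by simp
qed
lemma charpoly_Pn: assumes n: "n \<ge> 1" shows "char_poly (FRr n) = Pn n"
proof -
  let ?d = "char_poly (FRr n) - Pn n"
  have "UNIV - ff ` {..<n} \<subseteq> {x. poly ?d x = 0}"
    using detlemma[OF n] by auto
  moreover have "infinite (UNIV - ff ` {..<n})"
    by (simp add: infinite_UNIV_char_0 Diff_infinite_finite)
  ultimately have "infinite {x. poly ?d x = 0}" using finite_subset by blast
  then have "?d = 0" using poly_roots_finite by blast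
  then show ?thesis by simp
qed

lemma Sd_image: assumes "m \<ge> 1"
  shows "Sd n m = (\<lambda>t. t * Suc m - 1) ` {2..n div Suc m}"
proof
  show "Sd n m \<subseteq> (\<lambda>t. t * Suc m - 1) ` {2..n div Suc m}"
  proof
    fix l assume l: "l \<in> Sd n m"
    then obtain t where t: "Suc l = Suc m * t" and ml: "m < l" and ln: "l < n" by (auto simp: Sd_def elim!: dvdE)
    have "t \<ge> 2"
    proof (rule ccontr)
      assume "\<not> t \<ge> 2" then have "t \<le> 1" by simp
      then have "Suc m * t \<le> Suc m * 1" by (rule mult_le_mono2)
      with t ml show False by simp
    qed
    moreover have "t \<le> n div Suc m"
    proof -
      have "Suc m * t \<le> n" using t ln by simp
      then have "(Suc m * t) div Suc m \<le> n div Suc m" by (rule div_le_mono)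
      moreover have "(Suc m * t) div Suc m = t" by (rule nonzero_mult_div_cancel_left) simp
      ultimately show ?thesis by simp
    qed
    moreover have "l = t * Suc m - 1" using t by (simp add: mult.commute)
    ultimately show "l \<in> (\<lambda>t. t * Suc m - 1) ` {2..n div Suc m}" by auto
  qed
next
  show "(\<lambda>t. t * Suc m - 1) ` {2..n div Suc m} \<subseteq> Sd n m"
  proof
    fix l assume "l \<in> (\<lambda>t. t * Suc m - 1) ` {2..n div Suc m}"
    then obtain t where t: "2 \<le> t" "t \<le> n div Suc m" and l: "l = t * Suc m - 1" by auto
    have ge: "t * Suc m \<ge> 2 * Suc m" using t(1) by (rule mult_le_mono1)
    then have sl: "Suc l = t * Suc m" using l by simp
    have "n div Suc m * Suc m \<le> n" using div_mult_mod_eq[of n "Suc m"] by linarith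
    moreover have "t * Suc m \<le> n div Suc m * Suc m" using t(2) by (rule mult_le_mono1)
    ultimately have "t * Suc m \<le> n" by linarith
    then have "l < n" using sl by simp
    moreover have "m < l" using sl ge by simp
    moreover have "Suc m dvd Suc l" unfolding sl by (rule dvd_triv_right)
    ultimately show "l \<in> Sd n m" by (simp add: Sd_def)
  qed
qed

lemma fib_bound: assumes "m \<ge> 1"
  shows "ff m * (\<Sum>l\<in>Sd n m. 1 / (ff l - ff m)) \<le> 5/6"
proof -
  have inj: "inj_on (\<lambda>t. t * Suc m - 1) {2..n div Suc m}"
  proof (rule inj_onI)
    fix a b assume a: "a \<in> {2..n div Suc m}" and b: "b \<in> {2..n div Suc m}" and e: "a * Suc m - 1 = b * Suc m - 1"
    have "a * Suc m \<ge> 1" "b * Suc m \<ge> 1" using a b by auto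
    then have "a * Suc m = b * Suc m" using e by linarith
    then show "a = b" using mult_right_cancel[of "Suc m" a b] by simp
  qed
  have "(\<Sum>l\<in>Sd n m. 1 / (ff l - ff m)) = (\<Sum>t\<in>{2..n div Suc m}. 1 / (ff (t * Suc m - 1) - ff m))"
    unfolding Sd_image[OF assms] by (subst sum.reindex[OF inj]) simp
  also have "\<dots> = (\<Sum>t\<in>{2..n div Suc m}. 1 / (real (fib (t * Suc m)) - fib (Suc m)))"
  proof (rule sum.cong)
    fix t assume "t \<in> {2..n div Suc m}"
    then have "Suc (t * Suc m - 1) = t * Suc m" by (cases t) auto
    then show "1 / (ff (t * Suc m - 1) - ff m) = 1 / (real (fib (t * Suc m)) - fib (Suc m))"
      by (simp add: ff_def)
  qed simp
  finally show ?thesis using fib_multsum[of "Suc m" "n div Suc m"] assms by (simp add: ff_def)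
qed
lemma prod_neg_sign:
  fixes g :: "nat \<Rightarrow> real"
  assumes "\<And>c. c \<in> A \<Longrightarrow> g c < 0" "finite A"
  shows "(-1) ^ card A * (\<Prod>c\<in>A. g c) > 0"
proof -
  have "(\<Prod>c\<in>A. g c) = (\<Prod>c\<in>A. (-1) * (- g c))" by simp
  also have "\<dots> = (\<Prod>c\<in>A. (-1::real)) * (\<Prod>c\<in>A. - g c)" by (rule prod.distrib)
  also have "(\<Prod>c\<in>A. (-1::real)) = (-1) ^ card A" by (rule prod_constant)
  finally have "(-1) ^ card A * (\<Prod>c\<in>A. g c) = ((-1) ^ card A * (-1) ^ card A) * (\<Prod>c\<in>A. - g c)"
    by (simp add: mult.assoc)
  also have "(-1::real) ^ card A * (-1) ^ card A = 1" by (simp add: power_mult_distrib[symmetric])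
  finally show ?thesis using assms by (simp add: prod_pos)
qed

lemma tpos:
  assumes k: "1 \<le> k" "k < n"
  shows "k \<le> m \<Longrightarrow> m < n \<Longrightarrow>
    0 < poly (hp n m) (ff k) / (\<Prod>c\<in>{Suc m..<n}. ff k - ff c) \<and>
    poly (hp n m) (ff k) / (\<Prod>c\<in>{Suc m..<n}. ff k - ff c) \<le> 1"
proof (induction "n - m" arbitrary: m rule: less_induct)
  case less
  let ?x = "ff k"
  let ?D = "\<lambda>m. (\<Prod>c\<in>{Suc m..<n}. ?x - ff c)"
  let ?t = "\<lambda>m. poly (hp n m) ?x / ?D m"
  have Dnz: "?D j \<noteq> 0" if "k \<le> j" for j
  proof -
    have "?x - ff c \<noteq> 0" if "c \<in> {Suc j..<n}" for c using ff_strict[of k c] k that \<open>k \<le> j\<close> by auto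
    then show ?thesis by (simp add: prod_zero_iff)
  qed
  have m1: "1 \<le> m" using less k by simp
  have terms: "poly (hp n l) ?x * (\<Prod>c\<in>{Suc m..<l}. ?x - ff c) / ?D m = ?t l / (?x - ff l)"
    if l: "l \<in> Sd n m" for l
  proof -
    have l1: "Suc m \<le> l" "l < n" using l by (auto simp: Sd_def)
    have "?D m = (\<Prod>c\<in>{Suc m..<l}. ?x - ff c) * (\<Prod>c\<in>{l..<n}. ?x - ff c)"
      using l1 by (simp add: prod.atLeastLessThan_concat)
    also have "(\<Prod>c\<in>{l..<n}. ?x - ff c) = (?x - ff l) * ?D l" using l1 by (simp add: prod.atLeast_Suc_lessThan)
    finally have e: "?D m = (\<Prod>c\<in>{Suc m..<l}. ?x - ff c) * ((?x - ff l) * ?D l)" .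
    have "(\<Prod>c\<in>{Suc m..<l}. ?x - ff c) \<noteq> 0"
    proof -
      have "?x - ff c \<noteq> 0" if "c \<in> {Suc m..<l}" for c using ff_strict[of k c] k that less by auto
      then show ?thesis by (simp add: prod_zero_iff)
    qed
    moreover have "?x - ff l \<noteq> 0" using ff_strict[of k l] k l1 less by auto
    moreover have "?D l \<noteq> 0" using Dnz[of l] l1 less by simp
    ultimately show ?thesis unfolding e by (simp add: field_simps)
  qed
  have tm: "?t m = 1 + ff m * (\<Sum>l\<in>Sd n m. ?t l / (?x - ff l))"
  proof -
    have "?t m = (?D m + ff m * (\<Sum>l\<in>Sd n m. poly (hp n l) ?x * (\<Prod>c\<in>{Suc m..<l}. ?x - ff c))) / ?D m"
      using less by (simp add: poly_hp)
    also have "\<dots> = 1 + ff m * ((\<Sum>l\<in>Sd n m. poly (hp n l) ?x * (\<Prod>c\<in>{Suc m..<l}. ?x - ff c)) / ?D m)"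
      using Dnz[of m] less by (simp add: add_divide_distrib)
    also have "(\<Sum>l\<in>Sd n m. poly (hp n l) ?x * (\<Prod>c\<in>{Suc m..<l}. ?x - ff c)) / ?D m
        = (\<Sum>l\<in>Sd n m. poly (hp n l) ?x * (\<Prod>c\<in>{Suc m..<l}. ?x - ff c) / ?D m)"
      by (rule sum_divide_distrib)
    also have "\<dots> = (\<Sum>l\<in>Sd n m. ?t l / (?x - ff l))" by (rule sum.cong[OF refl terms])
    finally show ?thesis .
  qed
  have bnd: "- (1 / (ff l - ff m)) \<le> ?t l / (?x - ff l) \<and> ?t l / (?x - ff l) \<le> 0" if l: "l \<in> Sd n m" for l
  proof -
    have l1: "m < l" "l < n" using l by (auto simp: Sd_def)
    have IH: "0 < ?t l \<and> ?t l \<le> 1" using less.hyps[of l] l1 less by auto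
    have neg: "?x - ff l < 0" using ff_strict[of k l] k l1 less by auto
    have fm: "ff m < ff l" using ff_strict[of m l] m1 l1 by auto
    have xm: "?x \<le> ff m" using ff_mono[of k m] less by auto
    have "?x - ff l = - (ff l - ?x)" by simp
    then have "?t l / (?x - ff l) = - (?t l / (ff l - ?x))" by (simp only: divide_minus_right)
    moreover have "?t l / (ff l - ?x) \<le> 1 / (ff l - ?x)" by (rule divide_right_mono) (use IH neg in linarith)+
    moreover have "1 / (ff l - ?x) \<le> 1 / (ff l - ff m)" using fm xm by (simp add: frac_le)
    moreover have "?t l / (ff l - ?x) \<ge> 0" by (rule divide_nonneg_nonneg) (use IH neg in linarith)+
    ultimately show ?thesis by linarith
  qed
  have s1: "(\<Sum>l\<in>Sd n m. ?t l / (?x - ff l)) \<le> 0" using bnd by (simp add: sum_nonpos)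
  have s2: "- (\<Sum>l\<in>Sd n m. 1 / (ff l - ff m)) \<le> (\<Sum>l\<in>Sd n m. ?t l / (?x - ff l))"
    using bnd by (simp add: sum_negf[symmetric] sum_mono)
  have fb: "ff m * (\<Sum>l\<in>Sd n m. 1 / (ff l - ff m)) \<le> 5/6" using fib_bound[OF m1] .
  have fmp: "ff m > 0" by (rule ff_pos)
  have "ff m * (\<Sum>l\<in>Sd n m. ?t l / (?x - ff l)) \<ge> ff m * (- (\<Sum>l\<in>Sd n m. 1 / (ff l - ff m)))"
    by (rule mult_left_mono) (use s2 fmp in linarith)+
  moreover have "ff m * (\<Sum>l\<in>Sd n m. ?t l / (?x - ff l)) \<le> 0" by (rule mult_nonneg_nonpos) (use s1 fmp in linarith)+
  ultimately show ?case using tm fb by simp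
qed
lemma pos_aux: fixes P D s :: real assumes "D \<noteq> 0" "0 < P / D" "0 < s * D" shows "0 < s * P"
proof -
  have "s * P = (P / D) * (s * D)" using assms(1) by simp
  then show ?thesis using mult_pos_pos[OF assms(2) assms(3)] by simp
qed

lemma sign_Pn:
  assumes k: "1 \<le> k" "k < n"
  shows "(-1) ^ (n - 1 - k) * poly (Pn n) (ff k) < 0"
proof -
  let ?x = "ff k"
  let ?s = "(-1::real) ^ (n - 1 - k)"
  let ?D = "(\<Prod>c\<in>{Suc k..<n}. ?x - ff c)"
  have t: "0 < poly (hp n k) ?x / ?D" using tpos[OF k, of k] k by simp
  have neg: "?x - ff c < 0" if "c \<in> {Suc k..<n}" for c using ff_strict[of k c] k that by auto
  have sD: "?s * ?D > 0"
    using prod_neg_sign[of "{Suc k..<n}" "\<lambda>c. ?x - ff c", OF neg] by simp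
  have Dnz: "?D \<noteq> 0"
  proof
    assume "?D = 0" then show False using sD by (metis less_irrefl mult_zero_right)
  qed
  have hk: "?s * poly (hp n k) ?x > 0"
    using pos_aux[OF Dnz t sD] .
  have nonneg_prod: "(\<Prod>c\<in>{a..<b}. ?x - ff c) \<ge> 0" if "b \<le> Suc k" for a b
    using that by (intro prod_nonneg) (auto intro!: ff_mono simp: le_diff_eq)
  have zero_prod: "(\<Prod>c\<in>{a..<b}. ?x - ff c) = 0" if "a \<le> k" "k < b" for a b
    using that by (auto simp: prod_zero_iff)
  have hj: "1 \<le> j \<Longrightarrow> j \<le> k \<Longrightarrow> ?s * poly (hp n j) ?x \<ge> 0" for j
  proof (induction "k - j" arbitrary: j rule: less_induct)
    case less
    show ?case
    proof (cases "j = k")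
      case True then show ?thesis using hk by simp
    next
      case False
      then have jk: "j < k" using less by simp
      have "poly (hp n j) ?x = (\<Prod>c\<in>{Suc j..<n}. ?x - ff c) +
        ff j * (\<Sum>l\<in>Sd n j. poly (hp n l) ?x * (\<Prod>c\<in>{Suc j..<l}. ?x - ff c))"
        using jk k by (simp add: poly_hp)
      also have "(\<Prod>c\<in>{Suc j..<n}. ?x - ff c) = 0" using zero_prod[of "Suc j" n] jk k by simp
      finally have e: "?s * poly (hp n j) ?x = ff j * (\<Sum>l\<in>Sd n j. (?s * poly (hp n l) ?x) * (\<Prod>c\<in>{Suc j..<l}. ?x - ff c))"
        by (simp add: sum_distrib_left mult_ac)
      have "(\<Sum>l\<in>Sd n j. (?s * poly (hp n l) ?x) * (\<Prod>c\<in>{Suc j..<l}. ?x - ff c)) \<ge> 0"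
      proof (rule sum_nonneg)
        fix l assume l: "l \<in> Sd n j"
        show "(?s * poly (hp n l) ?x) * (\<Prod>c\<in>{Suc j..<l}. ?x - ff c) \<ge> 0"
        proof (cases "l \<le> k")
          case True
          have "?s * poly (hp n l) ?x \<ge> 0" using less.hyps[of l] l True less by (auto simp: Sd_def)
          moreover have "(\<Prod>c\<in>{Suc j..<l}. ?x - ff c) \<ge> 0" using nonneg_prod True by simp
          ultimately show ?thesis by simp
        next
          case False
          then have "(\<Prod>c\<in>{Suc j..<l}. ?x - ff c) = 0" using zero_prod[of "Suc j" l] jk by simp
          then show ?thesis by (metis mult_zero_right order_refl)
        qed
      qed
      then show ?thesis using e ff_pos[of j] by simp
    qed
  qed
  have "poly (Pn n) ?x = (\<Prod>c<n. ?x - ff c) - (\<Sum>l\<in>{1..<n}. poly (hp n l) ?x * (\<Prod>c\<in>{1..<l}. ?x - ff c))"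
    by (rule poly_Pn)
  also have "(\<Prod>c<n. ?x - ff c) = 0" using k by (auto simp: prod_zero_iff)
  finally have e: "?s * poly (Pn n) ?x = - (\<Sum>l\<in>{1..<n}. (?s * poly (hp n l) ?x) * (\<Prod>c\<in>{1..<l}. ?x - ff c))"
    by (simp add: sum_distrib_left mult_ac)
  have "(\<Sum>l\<in>{1..<n}. (?s * poly (hp n l) ?x) * (\<Prod>c\<in>{1..<l}. ?x - ff c)) > 0"
  proof (rule sum_pos2)
    show "k \<in> {1..<n}" using k by simp
    have "(\<Prod>c\<in>{1..<k}. ?x - ff c) > 0" by (rule prod_pos) (use ff_strict[of _ k] in auto)
    then show "(?s * poly (hp n k) ?x) * (\<Prod>c\<in>{1..<k}. ?x - ff c) > 0" using hk by simp
  next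
    fix l assume l: "l \<in> {1..<n}"
    show "(?s * poly (hp n l) ?x) * (\<Prod>c\<in>{1..<l}. ?x - ff c) \<ge> 0"
    proof (cases "l \<le> k")
      case True
      have "?s * poly (hp n l) ?x \<ge> 0" using hj[of l] l True by auto
      moreover have "(\<Prod>c\<in>{1..<l}. ?x - ff c) \<ge> 0" using nonneg_prod True by simp
      ultimately show ?thesis by simp
    next
      case False
      then have "(\<Prod>c\<in>{1..<l}. ?x - ff c) = 0" using zero_prod[of 1 l] k by simp
      then show ?thesis by (metis mult_zero_right order_refl)
    qed
  qed simp
  then show ?thesis using e by simp
qed
lemma below_set:
  fixes r :: "nat \<Rightarrow> real"
  assumes sm: "\<And>i j. i < j \<Longrightarrow> j < n \<Longrightarrow> r i < r j" and i: "i < n"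
  shows "card {y \<in> r ` {..<n}. y < r i} = i"
proof -
  have "{y \<in> r ` {..<n}. y < r i} = r ` {..<i}"
  proof
    show "{y \<in> r ` {..<n}. y < r i} \<subseteq> r ` {..<i}"
    proof
      fix y assume "y \<in> {y \<in> r ` {..<n}. y < r i}"
      then obtain j where j: "j < n" "y = r j" "r j < r i" by auto
      have "j < i"
      proof (rule ccontr)
        assume "\<not> j < i"
        then have "i = j \<or> i < j" by auto
        then show False using sm[of i j] j by auto
      qed
      then show "y \<in> r ` {..<i}" using j by auto
    qed
  next
    show "r ` {..<i} \<subseteq> {y \<in> r ` {..<n}. y < r i}" using sm i by auto
  qed
  moreover have "inj_on r {..<i}"
  proof (rule inj_onI)
    fix a b assume "a \<in> {..<i}" "b \<in> {..<i}" "r a = r b"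
    then show "a = b" using sm[of a b] sm[of b a] i by (metis lessThan_iff less_irrefl linorder_neqE_nat order.strict_trans)
  qed
  ultimately show ?thesis by (simp add: card_image)
qed

lemma mono_unique:
  fixes r g :: "nat \<Rightarrow> real"
  assumes sr: "\<And>i j. i < j \<Longrightarrow> j < n \<Longrightarrow> r i < r j"
    and sg: "\<And>i j. i < j \<Longrightarrow> j < n \<Longrightarrow> g i < g j"
    and im: "g ` {..<n} = r ` {..<n}" and i: "i < n"
  shows "g i = r i"
proof -
  have "g i \<in> r ` {..<n}" using im i by auto
  then obtain j where j: "j < n" "g i = r j" by auto
  have "i = j" using below_set[where r=g and n=n and i=i, OF sg i] below_set[where r=r and n=n and i=j, OF sr j(1)] j im by simp
  then show ?thesis using j by simp
qed

lemma sign_prod: fixes s1 s2 p1 p2 :: real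
  assumes "s1 * p1 < 0" "s2 * p2 < 0" "s1 * s2 = -1"
  shows "p1 * p2 < 0"
proof -
  have "(s1 * p1) * (s2 * p2) > 0" using assms mult_neg_neg by blast
  moreover have "(s1 * p1) * (s2 * p2) = (s1 * s2) * (p1 * p2)" by (simp add: mult_ac)
  ultimately show ?thesis using assms(3) by simp
qed

lemma sign_prod': fixes s p1 p2 :: real
  assumes "s * p1 > 0" "s * p2 < 0" "s * s = 1"
  shows "p1 * p2 < 0"
proof -
  have "(s * p1) * (s * p2) < 0" using assms mult_pos_neg by blast
  moreover have "(s * p1) * (s * p2) = (s * s) * (p1 * p2)" by (simp add: mult_ac)
  ultimately show ?thesis using assms(3) by simp
qed

lemma FRr_carrier: "FRr n \<in> carrier_mat n n" by (simp add: FRr_def)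

lemma roots_exist:
  assumes n: "n \<ge> 2"
  shows "\<exists>r. (\<forall>k<n. poly (Pn n) (r k) = 0) \<and> (\<forall>i j. i < j \<longrightarrow> j < n \<longrightarrow> r i < r j) \<and>
     r 0 < 1 \<and> (\<forall>k. 1 \<le> k \<and> k \<le> n - 2 \<longrightarrow> ff k < r k \<and> r k < ff (Suc k)) \<and> r (n-1) > ff (n-1)"
proof -
  let ?P = "Pn n"
  have dm: "degree ?P = n \<and> coeff ?P n = 1"
    using degree_monic_char_poly[OF FRr_carrier[of n]] charpoly_Pn[of n] n by simp
  then have lc: "lead_coeff ?P = 1" by simp
  obtain N where N: "\<And>x. x \<ge> N \<Longrightarrow> poly ?P x \<ge> 1" using poly_pinfty_gt_lc[of ?P] lc by auto
  let ?Q = "Polynomial.smult ((-1)^n) (pcompose ?P [:0, -1:])"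
  have "lead_coeff (pcompose ?P [:0, -1:]) = (-1)^n"
    using lead_coeff_comp[of "[:0, -1::real:]" ?P] lc dm by simp
  then have "lead_coeff ?Q = 1" by (simp add: power_mult_distrib[symmetric])
  then obtain N' where N': "\<And>x. x \<ge> N' \<Longrightarrow> poly ?Q x \<ge> 1" using poly_pinfty_gt_lc[of ?Q] by auto
  define a where "a = min (- N') 0"
  define b where "b = max N (ff (n-1) + 1)"
  have Pa: "(-1)^n * poly ?P a \<ge> 1" using N'[of "- a"] by (simp add: a_def poly_pcompose)
  have Pb: "poly ?P b \<ge> 1" using N[of b] by (simp add: b_def)
  have sg: "(-1) ^ (n - 1 - k) * poly ?P (ff k) < 0" if "1 \<le> k" "k < n" for k using sign_Pn[OF that] .
  define lo where "lo k = (if k = 0 then a else ff k)" for k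
  define hi where "hi k = (if k = n - 1 then b else ff (Suc k))" for k
  have ff1: "ff 1 = 1" by (simp add: ff_def numeral_2_eq_2[symmetric])
  have ex: "\<exists>y. poly ?P y = 0 \<and> lo k < y \<and> y < hi k" if k: "k < n" for k
  proof -
    consider "k = 0" | "1 \<le> k" "k < n - 1" | "k = n - 1" "k \<noteq> 0" using k by linarith
    then show ?thesis
    proof cases
      case 1
      have s1: "(-1) ^ (n - 1 - 1) * poly ?P (ff 1) < 0" using sg[of 1] n by simp
      have "(-1::real) ^ n = (-1) ^ (n - 1 - 1)"
      proof -
        obtain m where m: "n = m + 2" using n le_Suc_ex[of 2 n] by (auto simp: add.commute)
        then show ?thesis by (simp add: power_add)
      qed
      then have s0: "(-1) ^ (n - 1 - 1) * poly ?P a > 0" using Pa by simp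
      have "poly ?P a * poly ?P (ff 1) < 0"
        by (rule sign_prod'[OF s0 s1]) (simp add: power_mult_distrib[symmetric])
      moreover have "a < ff 1" using ff1 by (simp add: a_def)
      ultimately obtain y where "a < y" "y < ff 1" "poly ?P y = 0" using poly_IVT by blast
      then show ?thesis using 1 n by (auto simp: lo_def hi_def)
    next
      case 2
      have s1: "(-1) ^ (n - 1 - k) * poly ?P (ff k) < 0" using sg[of k] 2 by simp
      have s2: "(-1) ^ (n - 1 - Suc k) * poly ?P (ff (Suc k)) < 0" using sg[of "Suc k"] 2 by simp
      define m where "m = n - 1 - Suc k"
      have e: "n - 1 - k = Suc m" using 2 by (simp add: m_def)
      have ee: "(-1::real) ^ (n - 1 - k) * (-1) ^ (n - 1 - Suc k) = -1"
        unfolding e m_def[symmetric] by (simp add: power_mult_distrib[symmetric])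
      have "poly ?P (ff k) * poly ?P (ff (Suc k)) < 0"
        by (rule sign_prod[OF s1 s2 ee])
      moreover have "ff k < ff (Suc k)" using ff_strict[of k "Suc k"] 2 by simp
      ultimately obtain y where "ff k < y" "y < ff (Suc k)" "poly ?P y = 0" using poly_IVT by blast
      then show ?thesis using 2 by (auto simp: lo_def hi_def)
    next
      case 3
      have s1: "poly ?P (ff k) < 0" using sg[of k] 3 k by simp
      then have "poly ?P (ff k) * poly ?P b < 0" using Pb by (simp add: mult_neg_pos)
      moreover have "ff k < b" using 3 by (simp add: b_def)
      ultimately obtain y where "ff k < y" "y < b" "poly ?P y = 0" using poly_IVT by blast
      then show ?thesis using 3 by (auto simp: lo_def hi_def)
    qed
  qed
  then obtain r where r: "\<And>k. k < n \<Longrightarrow> poly ?P (r k) = 0 \<and> lo k < r k \<and> r k < hi k" by metis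
  have mono: "r i < r j" if "i < j" "j < n" for i j
  proof -
    have "hi i \<le> lo j"
    proof -
      have "i \<noteq> n - 1" "j \<noteq> 0" using that by auto
      then have "hi i = ff (Suc i)" "lo j = ff j" by (auto simp: hi_def lo_def)
      then show ?thesis using ff_mono[of "Suc i" j] that by simp
    qed
    then show ?thesis using r[of i] r[of j] that by fastforce
  qed
  show ?thesis
  proof (intro exI conjI allI impI)
    show "poly ?P (r k) = 0" if "k < n" for k using r that by blast
    show "r i < r j" if "i < j" "j < n" for i j using mono that by blast
    show "r 0 < 1" using r[of 0] n ff1 by (simp add: hi_def)
    show "ff k < r k" if "1 \<le> k \<and> k \<le> n - 2" for k
    proof -
      have "k < n" "k \<noteq> 0" using that n by linarith+
      then show ?thesis using r[of k] by (simp add: lo_def)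
    qed
    show "r k < ff (Suc k)" if "1 \<le> k \<and> k \<le> n - 2" for k
    proof -
      have "k < n" "k \<noteq> n - 1" using that n by linarith+
      then show ?thesis using r[of k] by (simp add: hi_def)
    qed
    show "r (n-1) > ff (n-1)" using r[of "n-1"] n by (simp add: lo_def)
  qed
qed
lemma poly_of_real_map: "poly (map_poly complex_of_real p) (complex_of_real y) = complex_of_real (poly p y)"
  by (induction p) (auto simp: map_poly_pCons)

theorem theorem5:
  fixes n :: nat
  assumes "n \<ge> 1"
  shows "(\<forall>\<mu>. eigenvalue (FR n) \<mu> \<longrightarrow>
            \<mu> \<in> \<real> \<and> order \<mu> (char_poly (FR n)) = 1)
       \<and> (\<forall>l :: nat \<Rightarrow> real.
            n \<ge> 2 \<and> strict_mono_on {1..n} l \<and>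
            (complex_of_real \<circ> l) ` {1..n} = {\<mu>. eigenvalue (FR n) \<mu>}
            \<longrightarrow> l 1 < 1
              \<and> (\<forall>i \<in> {2..n-1}. real (fib i) < l i \<and> l i < real (fib (i+1)))
              \<and> l n > real (fib n))"
proof -
  let ?cp = "char_poly (FR n)"
  have carr: "FR n \<in> carrier_mat n n" by (simp add: FR_def)
  have cpeq: "?cp = map_poly complex_of_real (Pn n)"
    using FR_FRr[of n] of_real_hom.char_poly_hom[OF FRr_carrier[of n]] charpoly_Pn[OF assms] by simp
  have dm: "degree ?cp = n \<and> coeff ?cp n = 1" by (rule degree_monic_char_poly[OF carr])
  have nz: "?cp \<noteq> 0" using dm by auto
  have eig: "eigenvalue (FR n) \<mu> \<longleftrightarrow> poly ?cp \<mu> = 0" for \<mu> by (rule eigenvalue_root_char_poly[OF carr])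
  have pr: "poly ?cp (complex_of_real y) = complex_of_real (poly (Pn n) y)" for y
    unfolding cpeq by (rule poly_of_real_map)
  obtain r where r0: "\<And>k. k < n \<Longrightarrow> poly (Pn n) (r k) = 0"
    and rm: "\<And>i j. i < j \<Longrightarrow> j < n \<Longrightarrow> r i < r j"
    and rp: "n \<ge> 2 \<Longrightarrow> r 0 < 1 \<and> (\<forall>k. 1 \<le> k \<and> k \<le> n - 2 \<longrightarrow> ff k < r k \<and> r k < ff (Suc k)) \<and> r (n-1) > ff (n-1)"
  proof (cases "n \<ge> 2")
    case True
    then show ?thesis using that roots_exist[OF True] by blast
  next
    case False
    then have n1: "n = 1" using assms by simp
    have "poly (Pn n) 1 = 0" by (simp add: poly_Pn n1)
    then show ?thesis using that[of "\<lambda>_. 1"] n1 False by auto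
  qed
  define R where "R = (\<lambda>k. complex_of_real (r k)) ` {..<n}"
  have inj: "inj_on (\<lambda>k. complex_of_real (r k)) {..<n}"
  proof (rule inj_onI)
    fix a b assume a: "a \<in> {..<n}" and b: "b \<in> {..<n}" and e: "complex_of_real (r a) = complex_of_real (r b)"
    then have "r a = r b" by simp
    then show "a = b" using rm[of a b] rm[of b a] a b by (metis lessThan_iff less_irrefl linorder_neqE_nat)
  qed
  have cardR: "card R = n" unfolding R_def using card_image[OF inj] by simp
  have finR: "finite R" unfolding R_def by simp
  have rootR: "poly ?cp z = 0" if "z \<in> R" for z using that r0 pr by (auto simp: R_def)
  have sub: "mset_set R \<subseteq># proots ?cp"
  proof (rule mset_subset_eqI)
    fix a
    show "count (mset_set R) a \<le> count (proots ?cp) a"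
    proof (cases "a \<in> R")
      case True
      then have "order a ?cp \<noteq> 0" using rootR[OF True] nz order_root by blast
      then show ?thesis using True finR nz by simp
    next
      case False
      then show ?thesis using finR by simp
    qed
  qed
  have sz: "size (proots ?cp) = n" using size_proots_complex[of ?cp] dm by simp
  have sz2: "size (mset_set R) = n" using cardR by simp
  have "size (proots ?cp - mset_set R) = 0" using size_Diff_submset[OF sub] sz sz2 by simp
  then have "proots ?cp - mset_set R = {#}" by simp
  then have eqm: "proots ?cp = mset_set R" using sub by (metis subset_mset.add_diff_inverse add.right_neutral)
  have setR: "{\<mu>. eigenvalue (FR n) \<mu>} = R"
  proof -
    have "{\<mu>. eigenvalue (FR n) \<mu>} = {\<mu>. poly ?cp \<mu> = 0}" using eig by auto
    also have "\<dots> = set_mset (proots ?cp)" using nz by simp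
    also have "\<dots> = R" using eqm finR by simp
    finally show ?thesis .
  qed
  have part1: "\<mu> \<in> \<real> \<and> order \<mu> ?cp = 1" if "eigenvalue (FR n) \<mu>" for \<mu>
  proof -
    have muR: "\<mu> \<in> R" using that setR by auto
    then have "\<mu> \<in> \<real>" by (auto simp: R_def)
    moreover have "order \<mu> ?cp = count (proots ?cp) \<mu>" using nz by simp
    moreover have "count (mset_set R) \<mu> = 1" using muR finR by simp
    ultimately show ?thesis using eqm by simp
  qed
  have part2: "l 1 < 1 \<and> (\<forall>i \<in> {2..n-1}. real (fib i) < l i \<and> l i < real (fib (i+1))) \<and> l n > real (fib n)"
    if n2: "n \<ge> 2" and sm: "strict_mono_on {1..n} l" and im: "(complex_of_real \<circ> l) ` {1..n} = {\<mu>. eigenvalue (FR n) \<mu>}"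
    for l :: "nat \<Rightarrow> real"
  proof -
    have "complex_of_real ` (l ` {1..n}) = complex_of_real ` (r ` {..<n})"
      using im setR unfolding R_def by (simp add: image_comp)
    then have lr: "l ` {1..n} = r ` {..<n}"
      by (rule inj_image_eq_iff[THEN iffD1, rotated]) (auto intro: inj_onI)
    define g where "g i = l (Suc i)" for i
    have gim: "g ` {..<n} = r ` {..<n}"
    proof -
      have "g ` {..<n} = l ` (Suc ` {..<n})" by (auto simp: g_def)
      also have "Suc ` {..<n} = {1..n}" by (rule image_Suc_lessThan)
      finally show ?thesis using lr by simp
    qed
    have gm: "g i < g j" if "i < j" "j < n" for i j
      using sm that unfolding g_def strict_mono_on_def by auto
    have lr2: "l (Suc i) = r i" if "i < n" for i
      using mono_unique[of n r g, OF rm gm gim that] by (simp add: g_def)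
    have P: "r 0 < 1 \<and> (\<forall>k. 1 \<le> k \<and> k \<le> n - 2 \<longrightarrow> ff k < r k \<and> r k < ff (Suc k)) \<and> r (n-1) > ff (n-1)"
      using rp n2 by blast
    have A: "l 1 < 1" using lr2[of 0] P n2 by simp
    have B: "real (fib i) < l i \<and> l i < real (fib (i+1))" if i: "i \<in> {2..n-1}" for i
    proof -
      have "1 \<le> i - 1 \<and> i - 1 \<le> n - 2" using i by auto
      then have "ff (i-1) < r (i-1) \<and> r (i-1) < ff (Suc (i-1))" using P by blast
      moreover have "l i = r (i - 1)" using lr2[of "i-1"] i n2 by auto
      moreover have "ff (i-1) = real (fib i)" "ff (Suc (i-1)) = real (fib (i+1))" using i by (auto simp: ff_def)
      ultimately show ?thesis by simp
    qed
    have C: "l n > real (fib n)"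
    proof -
      have "l n = r (n-1)" using lr2[of "n-1"] n2 by auto
      moreover have "ff (n-1) = real (fib n)" using n2 by (auto simp: ff_def)
      ultimately show ?thesis using P by simp
    qed
    show ?thesis using A B C by blast
  qed
  show ?thesis using part1 part2 by blast
qed

end
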